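(* Let $A$ be a commutative $\mathbb Q$-algebra, $a\in A$ a non-zero-divisor, $B=A[z]$ and $\mathcal D=\partial_z-a:B\to B$, $h\mapsto h'-ah$. Let $f=c_0+c_1z+\cdots+c_dz^d\in B$ with $v_a(c_i)\ge i+1$ for $0\le i\le d$. Then for every $g\in B$ we have $gf^m\in\mathrm{Im}\,\mathcal D$ for all sufficiently large $m$.
   Context: For $c\in A$, the $a$-order $v_a(c)\in\mathbb Z_{\ge0}\cup\{\infty\}$ is the supremum of the integers $m\ge0$ with $c\in Aa^m$ (so $v_a(c)=\infty$ if $c\in\bigcap_{m\ge1}Aa^m$). *)

theory Defs
  imports "HOL-Library.Extended_Nat" "HOL-Computational_Algebra.Polynomial"
begin

definition a_order :: "'a::comm_ring_1 \<Rightarrow> 'a \<Rightarrow> enat" where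
  "a_order a c = Sup {enat m | m. \<exists>b. c = b * a ^ m}"

text \<open>Formal derivative d/dz on A[z] (the library's pderiv needs no zero divisors, so we write it out).\<close>
definition zderiv :: "'a::comm_ring_1 poly \<Rightarrow> 'a poly" where
  "zderiv h = (\<Sum>i\<le>degree h. monom (of_nat i * coeff h i) (i - 1))"

definition Dop :: "'a::comm_ring_1 \<Rightarrow> 'a poly \<Rightarrow> 'a poly" where
  "Dop a h = zderiv h - smult a h"

end

theory Submission
  imports Defs
begin

lemma coeff_zderiv: "coeff (zderiv h) n = of_nat (Suc n) * coeff h (Suc n)"
proof -
  have "coeff (zderiv h) n = (\<Sum>i\<le>degree h. if i - 1 = n then of_nat i * coeff h i else 0)"
    by (simp add: zderiv_def coeff_sum coeff_monom)
  also have "\<dots> = (\<Sum>i\<in>{..degree h} \<inter> {Suc n}. of_nat i * coeff h i)"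
    proof (rule sum.mono_neutral_cong_right)
    show "\<forall>i\<in>{..degree h} - {..degree h} \<inter> {Suc n}. (if i - 1 = n then of_nat i * coeff h i else 0) = 0"
    proof
      fix i assume i: "i \<in> {..degree h} - {..degree h} \<inter> {Suc n}"
      show "(if i - 1 = n then of_nat i * coeff h i else 0) = 0"
      proof (cases "i = 0")
        case False then show ?thesis using i by auto
      qed simp
    qed
  qed auto
  also have "\<dots> = of_nat (Suc n) * coeff h (Suc n)"
    by (cases "Suc n \<le> degree h") (auto simp: coeff_eq_0)
  finally show ?thesis .
qed

lemma Dop_add: "Dop a (x + y) = Dop a x + Dop a y"
  by (rule poly_eqI) (simp add: Dop_def coeff_zderiv algebra_simps)

lemma Dop_minus: "Dop a (x - y) = Dop a x - Dop a y"
  by (rule poly_eqI) (simp add: Dop_def coeff_zderiv algebra_simps)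

lemma Dop_zero: "Dop a 0 = 0"
  by (rule poly_eqI) (simp add: Dop_def coeff_zderiv)

lemma Dop_monom: "Dop a (monom c n) = monom (of_nat n * c) (n - 1) - monom (a * c) n"
  by (rule poly_eqI) (cases n, auto simp: Dop_def coeff_zderiv coeff_monom)

lemma range_add: "x \<in> range (Dop a) \<Longrightarrow> y \<in> range (Dop a) \<Longrightarrow> x + y \<in> range (Dop a)"
  by (auto simp: Dop_add[symmetric])

lemma range_minus: "x \<in> range (Dop a) \<Longrightarrow> y \<in> range (Dop a) \<Longrightarrow> x - y \<in> range (Dop a)"
  by (auto simp: Dop_minus[symmetric])

lemma range_sum: "finite S \<Longrightarrow> (\<And>i. i \<in> S \<Longrightarrow> F i \<in> range (Dop a)) \<Longrightarrow> sum F S \<in> range (Dop a)"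
proof (induction S rule: finite_induct)
  case empty
  then show ?case using Dop_zero by (metis rangeI sum.empty)
next
  case (insert x S)
  then show ?case by (simp add: range_add)
qed

lemma monom_in_range: "monom (b * a ^ Suc n) n \<in> range (Dop a)"
proof (induction n arbitrary: b)
  case 0
  have "Dop a (monom (- b) 0) = monom (b * a ^ Suc 0) 0"
    by (rule poly_eqI) (simp add: Dop_monom coeff_monom algebra_simps)
  then show ?case by (metis rangeI)
next
  case (Suc n)
  have e: "Dop a (monom (- (b * a ^ Suc n)) (Suc n))
      = monom (b * a ^ Suc (Suc n)) (Suc n) + monom ((- (of_nat (Suc n) * b)) * a ^ Suc n) n"
    by (rule poly_eqI) (auto simp: Dop_monom coeff_monom algebra_simps)
  have "monom (b * a ^ Suc (Suc n)) (Suc n) = Dop a (monom (- (b * a ^ Suc n)) (Suc n))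
        - monom ((- (of_nat (Suc n) * b)) * a ^ Suc n) n"
    unfolding e by simp
  then show ?case using Suc range_minus by (metis rangeI)
qed

lemma in_range:
  assumes "\<And>i. a ^ Suc i dvd coeff p i"
  shows "p \<in> range (Dop a)"
proof -
  have "p = (\<Sum>i\<le>degree p. monom (coeff p i) i)" by (simp add: poly_as_sum_of_monoms)
  moreover have "(\<Sum>i\<le>degree p. monom (coeff p i) i) \<in> range (Dop a)"
  proof (rule range_sum)
    fix i
    obtain b where "coeff p i = a ^ Suc i * b" using assms by (meson dvdE)
    then show "monom (coeff p i) i \<in> range (Dop a)"
      using monom_in_range[of b a i] by (simp add: mult.commute)
  qed simp
  ultimately show ?thesis by simp
qed

lemma order_dvd:
  assumes "a_order a c \<ge> enat (Suc i)"
  shows "a ^ Suc i dvd c"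
proof -
  have "enat i < a_order a c" using assms
    by (meson enat_ord_simps(2) lessI order_less_le_trans)
  then obtain x where "x \<in> {enat m | m. \<exists>b. c = b * a ^ m}" "enat i < x"
    unfolding a_order_def by (auto simp: less_Sup_iff)
  then obtain m b where m: "enat i < enat m" "c = b * a ^ m" by auto
  then have "Suc i \<le> m" by simp
  then have "a ^ m = a ^ Suc i * a ^ (m - Suc i)" by (metis le_add_diff_inverse power_add)
  then show ?thesis using m by simp
qed

lemma pow_dvd:
  assumes "\<And>i. a ^ Suc i dvd coeff f i"
  shows "a ^ (i + m) dvd coeff (f ^ m) i"
proof (induction m arbitrary: i)
  case 0
  then show ?case by (cases i) auto
next
  case (Suc m)
  have "coeff (f ^ Suc m) i = (\<Sum>j\<le>i. coeff f j * coeff (f ^ m) (i - j))"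
    by (simp add: coeff_mult)
  also have "a ^ (i + Suc m) dvd \<dots>"
  proof (rule dvd_sum)
    fix j assume "j \<in> {..i}"
    then have "i + Suc m = Suc j + (i - j + m)" by simp
    then show "a ^ (i + Suc m) dvd coeff f j * coeff (f ^ m) (i - j)"
      by (metis Suc.IH assms mult_dvd_mono power_add)
  qed
  finally show ?case .
qed

theorem corollary2p12:
  fixes a :: "'a::comm_ring_1" and f :: "'a poly"
  assumes Qalg: "\<And>n::nat. n > 0 \<Longrightarrow> (of_nat n :: 'a) dvd 1"
    and nzd: "\<And>x::'a. a * x = 0 \<Longrightarrow> x = 0"
    and ord: "\<And>i. i \<le> degree f \<Longrightarrow> a_order a (coeff f i) \<ge> enat (i + 1)"
  shows "\<forall>g :: 'a poly. \<exists>M. \<forall>m\<ge>M. g * f ^ m \<in> range (Dop a)"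
proof
  fix g :: "'a poly"
  have fd: "a ^ Suc i dvd coeff f i" for i
  proof (cases "i \<le> degree f")
    case True then show ?thesis using ord[OF True] order_dvd by simp
  next
    case False then show ?thesis by (simp add: coeff_eq_0)
  qed
  show "\<exists>M. \<forall>m\<ge>M. g * f ^ m \<in> range (Dop a)"
  proof (intro exI allI impI)
    fix m assume m: "Suc (degree g) \<le> m"
    show "g * f ^ m \<in> range (Dop a)"
    proof (rule in_range)
      fix i
      have "coeff (g * f ^ m) i = (\<Sum>j\<le>i. coeff g j * coeff (f ^ m) (i - j))"
        by (simp add: coeff_mult)
      also have "a ^ Suc i dvd \<dots>"
      proof (rule dvd_sum)
        fix j assume j: "j \<in> {..i}"
        show "a ^ Suc i dvd coeff g j * coeff (f ^ m) (i - j)"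
        proof (cases "j \<le> degree g")
          case True
          then have "i - j + m = Suc i + (i - j + m - Suc i)" using j m by auto
          then have "a ^ Suc i dvd a ^ (i - j + m)" by (metis dvd_triv_left power_add)
          then show ?thesis using pow_dvd[OF fd, of "i - j" m]
            by (meson dvd_mult dvd_trans)
        next
          case False then show ?thesis by (simp add: coeff_eq_0)
        qed
      qed
      finally show "a ^ Suc i dvd coeff (g * f ^ m) i" .
    qed
  qed
qed

end
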